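(* Let $(\vartheta_n)_{n\ge0}$ be a submartingale with $\vartheta_n\in[0,1]$ for all $n$, and let $\vartheta_\infty$ be its almost sure limit. Let $S=\{0,1\}$ and let $\xi_n$ be the random probability measure on $S$ with $\xi_n(\{1\})=\vartheta_n$, $\xi_n(\{0\})=1-\vartheta_n$. If $\boldsymbol X=(X_0,X_1,\dots)$ is a sequence of $S$-valued random variables having $\boldsymbol\xi=(\xi_0,\xi_1,\dots)$ as a product disintegration, then \[ \lim_{n\to\infty}\frac1n\sum_{i=0}^{n-1}\mathbb 1_{\{X_i=1\}}=\vartheta_\infty\quad\text{almost surely.} \]
   Context: A sequence $\boldsymbol\xi$ of random probability measures on $S$ is a product disintegration of $\boldsymbol X$ if, with probability one, $\mathbb{P}[X_0\in A_0,\dots,X_n\in A_n\mid \boldsymbol{\xi}] = \xi_0(A_0)\cdots\xi_n(A_n)$ holds simultaneously for every $n\ge 0$ and all subsets $A_0,\dots,A_n$ of $S$ (conditioning on $\sigma(\boldsymbol\xi)$). *)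

theory Defs
  imports "HOL-Probability.Probability"
begin

definition submartingale :: "'a measure \<Rightarrow> (nat \<Rightarrow> 'a measure) \<Rightarrow> (nat \<Rightarrow> 'a \<Rightarrow> real) \<Rightarrow> bool" where
  "submartingale M F Y \<longleftrightarrow>
     (\<forall>n. subalgebra M (F n)) \<and>
     (\<forall>n m. n \<le> m \<longrightarrow> sets (F n) \<subseteq> sets (F m)) \<and>
     (\<forall>n. Y n \<in> borel_measurable (F n)) \<and>
     (\<forall>n. integrable M (Y n)) \<and>
     (\<forall>n. AE x in M. Y n x \<le> real_cond_exp M (F n) (Y (Suc n)) x)"

definition sigma_rm :: "'a measure \<Rightarrow> 'b set \<Rightarrow> (nat \<Rightarrow> 'a \<Rightarrow> 'b set \<Rightarrow> real) \<Rightarrow> 'a measure" where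
  "sigma_rm M S \<xi> = sigma (space M)
     {(\<lambda>x. \<xi> n x A) -` B \<inter> space M | n A B. A \<subseteq> S \<and> B \<in> sets borel}"

definition product_disintegration ::
  "'a measure \<Rightarrow> 'b set \<Rightarrow> (nat \<Rightarrow> 'a \<Rightarrow> 'b) \<Rightarrow> (nat \<Rightarrow> 'a \<Rightarrow> 'b set \<Rightarrow> real) \<Rightarrow> bool" where
  "product_disintegration M S X \<xi> \<longleftrightarrow>
     (AE x in M. \<forall>n. \<forall>A :: nat \<Rightarrow> 'b set. (\<forall>i\<le>n. A i \<subseteq> S) \<longrightarrow>
        real_cond_exp M (sigma_rm M S \<xi>)
          (indicator {y \<in> space M. \<forall>i\<le>n. X i y \<in> A i}) x
        = (\<Prod>i\<le>n. \<xi> i x (A i)))"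

definition bern_rm :: "(nat \<Rightarrow> 'a \<Rightarrow> real) \<Rightarrow> nat \<Rightarrow> 'a \<Rightarrow> nat set \<Rightarrow> real" where
  "bern_rm \<theta> n x A = (if (1::nat) \<in> A then \<theta> n x else 0) + (if (0::nat) \<in> A then 1 - \<theta> n x else 0)"

end

theory Submission
  imports Defs "HOL-Library.Discrete_Functions"
begin


lemma cesaro0:
  fixes b :: "nat \<Rightarrow> real"
  assumes "b \<longlonglongrightarrow> 0"
  shows "(\<lambda>n. (\<Sum>i<n. b i) / real n) \<longlonglongrightarrow> 0"
proof (rule LIMSEQ_I)
  fix r :: real assume r: "r > 0"
  from LIMSEQ_D[OF assms, of "r/2"] r obtain N where N: "\<And>n. n \<ge> N \<Longrightarrow> norm (b n) < r/2"
    by auto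
  define C where "C = (\<Sum>i<N. \<bar>b i\<bar>)"
  have C0: "C \<ge> 0" unfolding C_def by (simp add: sum_nonneg)
  define n0 where "n0 = max (N+1) (nat \<lceil>2*C/r\<rceil> + 1)"
  show "\<exists>no. \<forall>n\<ge>no. norm ((\<Sum>i<n. b i) / real n - 0) < r"
  proof (intro exI allI impI)
    fix n assume n: "n \<ge> n0"
    hence nN: "n \<ge> N" and nC: "real n > 2*C/r" unfolding n0_def by linarith+
    have npos: "real n > 0" using n unfolding n0_def by auto
    have split: "{..<n} = {..<N} \<union> {N..<n}" using nN by auto
    have "\<bar>\<Sum>i<n. b i\<bar> \<le> (\<Sum>i<n. \<bar>b i\<bar>)" by (rule sum_abs)
    also have "\<dots> = C + (\<Sum>i\<in>{N..<n}. \<bar>b i\<bar>)"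
      unfolding C_def split by (subst sum.union_disjoint) auto
    also have "(\<Sum>i\<in>{N..<n}. \<bar>b i\<bar>) \<le> (\<Sum>i\<in>{N..<n}. r/2)"
      using N by (intro sum_mono) (fastforce intro: less_imp_le)
    also have "\<dots> \<le> real n * (r/2)" using r by simp
    finally have "\<bar>\<Sum>i<n. b i\<bar> \<le> C + real n * (r/2)" by simp
    moreover have "C < real n * (r/2)" using nC r by (simp add: field_simps)
    ultimately have "\<bar>\<Sum>i<n. b i\<bar> < real n * r" by linarith
    thus "norm ((\<Sum>i<n. b i) / real n - 0) < r" using npos
      by (simp add: abs_divide field_simps)
  qed
qed

lemma cesaro:
  fixes a :: "nat \<Rightarrow> real"
  assumes "a \<longlonglongrightarrow> L"
  shows "(\<lambda>n. (\<Sum>i<n. a i) / real n) \<longlonglongrightarrow> L"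
proof -
  have "(\<lambda>i. a i - L) \<longlonglongrightarrow> 0" using assms by (simp add: LIM_zero)
  from tendsto_add[OF cesaro0[OF this] tendsto_const[of L]]
  have *: "(\<lambda>n. (\<Sum>i<n. a i - L) / real n + L) \<longlonglongrightarrow> L" by simp
  show ?thesis
  proof (rule Lim_transform_eventually[OF *])
    show "\<forall>\<^sub>F n in sequentially. (\<Sum>i<n. a i - L) / real n + L = (\<Sum>i<n. a i) / real n"
      using eventually_ge_at_top[of 1] by eventually_elim (simp add: sum_subtractf field_simps)
  qed
qed

lemma floor_sqrt_at_top: "filterlim floor_sqrt at_top sequentially"
  unfolding filterlim_at_top
proof (intro allI)
  fix Z :: nat
  show "\<forall>\<^sub>F n in sequentially. Z \<le> floor_sqrt n"
    using eventually_ge_at_top[of "Z^2"] by eventually_elim (rule le_floor_sqrtI)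
qed

lemma interp:
  fixes Y :: "nat \<Rightarrow> real"
  assumes bnd: "\<And>i. \<bar>Y i\<bar> \<le> 1"
    and lim: "(\<lambda>k. (\<Sum>i<(Suc k)^2. Y i) / real ((Suc k)^2)) \<longlonglongrightarrow> 0"
  shows "(\<lambda>n. (\<Sum>i<n. Y i) / real n) \<longlonglongrightarrow> 0"
proof -
  define g where "g k = (\<Sum>i<k^2. Y i) / real (k^2)" for k
  have "g \<longlonglongrightarrow> 0" using lim unfolding g_def by (subst filterlim_sequentially_Suc[symmetric]) simp
  hence "(\<lambda>k. \<bar>g k\<bar> + 2 / real k) \<longlonglongrightarrow> 0 + 0"
    by (intro tendsto_add tendsto_rabs_zero lim_const_over_n)
  hence gl: "(\<lambda>k. \<bar>g k\<bar> + 2 / real k) \<longlonglongrightarrow> 0" by simp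
  have gl2: "(\<lambda>n. \<bar>g (floor_sqrt n)\<bar> + 2 / real (floor_sqrt n)) \<longlonglongrightarrow> 0"
    using filterlim_compose[OF gl floor_sqrt_at_top] by (simp add: o_def)
  show ?thesis
  proof (rule Lim_null_comparison[OF _ gl2])
    show "\<forall>\<^sub>F n in sequentially. norm ((\<Sum>i<n. Y i) / real n) \<le> \<bar>g (floor_sqrt n)\<bar> + 2 / real (floor_sqrt n)"
      using eventually_ge_at_top[of 1]
    proof eventually_elim
      case (elim n)
      define k where "k = floor_sqrt n"
      have k1: "k \<ge> 1" unfolding k_def using elim by (simp add: Suc_le_eq)
      have kn: "k^2 \<le> n" unfolding k_def by simp
      have nk: "n < (Suc k)^2" unfolding k_def by (rule Suc_floor_sqrt_power2_gt)
      have nk': "real n - real (k^2) \<le> 2 * real k"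
      proof -
        have "n \<le> k^2 + 2*k" using nk by (simp add: power2_eq_square)
        hence "real n \<le> real (k^2 + 2*k)" by (simp only: of_nat_le_iff)
        thus ?thesis by simp
      qed
      have split: "{..<n} = {..<k^2} \<union> {k^2..<n}" using kn by auto
      have S: "(\<Sum>i<n. Y i) = (\<Sum>i<k^2. Y i) + (\<Sum>i\<in>{k^2..<n}. Y i)"
        unfolding split by (subst sum.union_disjoint) auto
      have R: "\<bar>\<Sum>i\<in>{k^2..<n}. Y i\<bar> \<le> real n - real (k^2)"
      proof -
        have "\<bar>\<Sum>i\<in>{k^2..<n}. Y i\<bar> \<le> (\<Sum>i\<in>{k^2..<n}. \<bar>Y i\<bar>)" by (rule sum_abs)
        also have "\<dots> \<le> (\<Sum>i\<in>{k^2..<n}. 1)" by (rule sum_mono) (rule bnd)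
        also have "\<dots> = real n - real (k^2)" using kn by (simp add: of_nat_diff)
        finally show ?thesis .
      qed
      have npos: "real n > 0" using elim by simp
      have kpos: "real (k^2) > 0" using k1 by simp
      have "(\<Sum>i<n. Y i) / real n = g k * (real (k^2) / real n) + (\<Sum>i\<in>{k^2..<n}. Y i) / real n"
        unfolding S g_def using npos kpos by (simp add: field_simps)
      hence "\<bar>(\<Sum>i<n. Y i) / real n\<bar> \<le> \<bar>g k\<bar> * (real (k^2) / real n) + \<bar>\<Sum>i\<in>{k^2..<n}. Y i\<bar> / real n"
      proof -
        have "\<bar>g k * (real (k^2) / real n) + (\<Sum>i\<in>{k^2..<n}. Y i) / real n\<bar>
             \<le> \<bar>g k * (real (k^2) / real n)\<bar> + \<bar>(\<Sum>i\<in>{k^2..<n}. Y i) / real n\<bar>"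
          by (rule abs_triangle_ineq)
        also have "\<dots> = \<bar>g k\<bar> * (real (k^2) / real n) + \<bar>\<Sum>i\<in>{k^2..<n}. Y i\<bar> / real n"
          using npos by (simp add: abs_mult abs_divide)
        finally show ?thesis using \<open>(\<Sum>i<n. Y i) / real n = _\<close> by simp
      qed
      also have "\<dots> \<le> \<bar>g k\<bar> * 1 + (2 * real k) / real (k^2)"
      proof (intro add_mono mult_left_mono)
        show "real (k^2) / real n \<le> 1" using kn npos by simp
        have "\<bar>\<Sum>i\<in>{k^2..<n}. Y i\<bar> / real n \<le> (2 * real k) / real n"
          using R nk' npos by (intro divide_right_mono) auto
        also have "\<dots> \<le> (2 * real k) / real (k^2)"
          using kn kpos npos by (intro divide_left_mono) (auto simp del: of_nat_power)
        finally show "\<bar>\<Sum>i\<in>{k^2..<n}. Y i\<bar> / real n \<le> (2 * real k) / real (k^2)" .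
      qed auto
      also have "(2 * real k) / real (k^2) = 2 / real k" using k1 by (simp add: power2_eq_square)
      finally show ?case unfolding k_def by simp
    qed
  qed
qed



lemma setup_facts:
  fixes M :: "'a measure" and F :: "nat \<Rightarrow> 'a measure"
    and \<theta> :: "nat \<Rightarrow> 'a \<Rightarrow> real"
    and X :: "nat \<Rightarrow> 'a \<Rightarrow> nat"
  assumes P: "prob_space M"
    and sub: "submartingale M F \<theta>"
    and th01: "\<And>n x. x \<in> space M \<Longrightarrow> 0 \<le> \<theta> n x \<and> \<theta> n x \<le> 1"
    and Xm: "\<And>i. X i \<in> measurable M (count_space UNIV)"
    and X01: "\<And>i x. x \<in> space M \<Longrightarrow> X i x \<in> {0, 1}"
    and PD: "product_disintegration M {0, 1} X (bern_rm \<theta>)"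
    and Zm: "Z \<in> borel_measurable (sigma_rm M {0, 1} (bern_rm \<theta>))"
    and Zb: "\<And>x. x \<in> space M \<Longrightarrow> \<bar>Z x\<bar> \<le> 1"
    and T: "T \<subseteq> {..N}"
  shows "(\<integral>x. Z x * (\<Prod>i\<in>T. indicator {y. X i y = 1} x) \<partial>M) = (\<integral>x. Z x * (\<Prod>i\<in>T. \<theta> i x) \<partial>M)"
proof -
  interpret prob_space M by fact
  have thM[measurable]: "\<And>n. \<theta> n \<in> borel_measurable M"
    using sub measurable_from_subalg unfolding submartingale_def by blast
  note Xm[measurable]
  define G where "G = sigma_rm M {0,1} (bern_rm \<theta>)"
  define E where "E = {(\<lambda>x. bern_rm \<theta> n x A) -` B \<inter> space M | n A B. A \<subseteq> {0::nat,1} \<and> B \<in> sets borel}"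
  have EM: "E \<subseteq> sets M"
  proof
    fix s assume "s \<in> E"
    then obtain n A B where s: "s = (\<lambda>x. bern_rm \<theta> n x A) -` B \<inter> space M" and B: "B \<in> sets borel"
      unfolding E_def by blast
    have "(\<lambda>x. bern_rm \<theta> n x A) \<in> borel_measurable M" unfolding bern_rm_def by measurable
    thus "s \<in> sets M" unfolding s using B by (rule measurable_sets)
  qed
  have EP: "E \<subseteq> Pow (space M)" using EM sets.sets_into_space by blast
  have G_eq: "G = sigma (space M) E" unfolding G_def E_def sigma_rm_def by simp
  have spG: "space G = space M" unfolding G_eq using EP by simp
  have setsG: "sets G = sigma_sets (space M) E" unfolding G_eq using EP by simp
  have subG: "subalgebra M G" unfolding subalgebra_def using spG setsG sets.sigma_sets_subset[OF EM] by simp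
  have "finite_measure_subalgebra M G"
    unfolding finite_measure_subalgebra_def finite_measure_subalgebra_axioms_def
    using subG finite_measure_axioms by simp
  then interpret S: sigma_finite_subalgebra M G by (rule finite_measure_subalgebra_is_sigma_finite)
  have thG[measurable]: "\<theta> n \<in> borel_measurable G" for n
  proof (rule measurableI)
    fix B :: "real set" assume B: "B \<in> sets borel"
    have "\<theta> n -` B \<inter> space G = (\<lambda>x. bern_rm \<theta> n x {1}) -` B \<inter> space M"
      unfolding spG by (auto simp: bern_rm_def)
    also have "\<dots> \<in> E" unfolding E_def using B by blast
    finally show "\<theta> n -` B \<inter> space G \<in> sets G" unfolding setsG by (rule sigma_sets.Basic)
  qed auto
  have ZG[measurable]: "Z \<in> borel_measurable G" using Zm unfolding G_def .
  have ZM[measurable]: "Z \<in> borel_measurable M" using measurable_from_subalg[OF subG ZG] .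
  define A where "A i = (if i \<in> T then {1} else {0, 1::nat})" for i
  define f where "f = (indicator {y \<in> space M. \<forall>i\<le>N. X i y \<in> A i} :: 'a \<Rightarrow> real)"
  have fM[measurable]: "f \<in> borel_measurable M" unfolding f_def by measurable
  have ce: "AE x in M. real_cond_exp M G f x = (\<Prod>i\<le>N. bern_rm \<theta> i x (A i))"
    using PD unfolding product_disintegration_def G_def f_def
    by eventually_elim (auto simp: A_def)
  have prodA: "(\<Prod>i\<le>N. bern_rm \<theta> i x (A i)) = (\<Prod>i\<in>T. \<theta> i x)" for x
  proof -
    have "(\<Prod>i\<le>N. bern_rm \<theta> i x (A i)) = (\<Prod>i\<le>N. if i \<in> T then \<theta> i x else 1)"
      by (intro prod.cong) (auto simp: A_def bern_rm_def)
    also have "\<dots> = (\<Prod>i\<in>T. \<theta> i x)"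
      using T by (subst prod.If_cases) (auto simp: Int_absorb1 intro!: arg_cong2[where f=prod])
    finally show ?thesis .
  qed
  have fI: "f x = (\<Prod>i\<in>T. indicator {y. X i y = 1} x)" if x: "x \<in> space M" for x
  proof -
    have "(\<forall>i\<le>N. X i x \<in> A i) \<longleftrightarrow> (\<forall>i\<in>T. X i x = 1)"
      using T X01[OF x] by (auto simp: A_def)
    moreover have "(\<Prod>i\<in>T. indicator {y. X i y = 1} x :: real) = (if \<forall>i\<in>T. X i x = 1 then 1 else 0)"
      using finite_subset[OF T] by (induction T rule: finite_induct) (auto simp: indicator_def)
    ultimately show ?thesis unfolding f_def using x by (auto simp: indicator_def)
  qed
  have intZf: "integrable M (\<lambda>x. Z x * f x)"
    by (rule integrable_const_bound[where B=1]) (auto intro!: AE_I2 simp: abs_mult f_def indicator_def Zb)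
  have "(\<integral>x. Z x * (\<Prod>i\<in>T. indicator {y. X i y = 1} x) \<partial>M) = (\<integral>x. Z x * f x \<partial>M)"
    by (rule Bochner_Integration.integral_cong) (auto simp: fI)
  also have "\<dots> = (\<integral>x. Z x * real_cond_exp M G f x \<partial>M)"
    by (rule S.real_cond_exp_intg(2)[symmetric]) (use intZf in auto)
  also have "\<dots> = (\<integral>x. Z x * (\<Prod>i\<in>T. \<theta> i x) \<partial>M)"
    by (intro integral_cong_AE) (use ce prodA in auto)
  finally show ?thesis .
qed



lemma theta_G:
  fixes M :: "'a measure" and \<theta> :: "nat \<Rightarrow> 'a \<Rightarrow> real"
  assumes thM[measurable]: "\<And>n. \<theta> n \<in> borel_measurable M"
  shows "\<theta> n \<in> borel_measurable (sigma_rm M {0,1} (bern_rm \<theta>))"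
proof -
  define G where "G = sigma_rm M {0,1} (bern_rm \<theta>)"
  define E where "E = {(\<lambda>x. bern_rm \<theta> n x A) -` B \<inter> space M | n A B. A \<subseteq> {0::nat,1} \<and> B \<in> sets borel}"
  have EM: "E \<subseteq> sets M"
  proof
    fix s assume "s \<in> E"
    then obtain n A B where s: "s = (\<lambda>x. bern_rm \<theta> n x A) -` B \<inter> space M" and B: "B \<in> sets borel"
      unfolding E_def by blast
    have "(\<lambda>x. bern_rm \<theta> n x A) \<in> borel_measurable M" unfolding bern_rm_def by measurable
    thus "s \<in> sets M" unfolding s using B by (rule measurable_sets)
  qed
  have EP: "E \<subseteq> Pow (space M)" using EM sets.sets_into_space by blast
  have G_eq: "G = sigma (space M) E" unfolding G_def E_def sigma_rm_def by simp
  have spG: "space G = space M" unfolding G_eq using EP by simp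
  have setsG: "sets G = sigma_sets (space M) E" unfolding G_eq using EP by simp
  have "\<theta> n \<in> borel_measurable G"
  proof (rule measurableI)
    fix B :: "real set" assume B: "B \<in> sets borel"
    have "\<theta> n -` B \<inter> space G = (\<lambda>x. bern_rm \<theta> n x {1}) -` B \<inter> space M"
      unfolding spG by (auto simp: bern_rm_def)
    also have "\<dots> \<in> E" unfolding E_def using B by blast
    finally show "\<theta> n -` B \<inter> space G \<in> sets G" unfolding setsG by (rule sigma_sets.Basic)
  qed auto
  thus ?thesis unfolding G_def .
qed

theorem mainTheorem5:
  fixes M :: "'a measure" and F :: "nat \<Rightarrow> 'a measure"
    and \<theta> :: "nat \<Rightarrow> 'a \<Rightarrow> real" and \<theta>inf :: "'a \<Rightarrow> real"
    and X :: "nat \<Rightarrow> 'a \<Rightarrow> nat"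
  assumes "prob_space M"
    and "submartingale M F \<theta>"
    and "\<And>n x. x \<in> space M \<Longrightarrow> 0 \<le> \<theta> n x \<and> \<theta> n x \<le> 1"
    and "\<theta>inf \<in> borel_measurable M"
    and "AE x in M. (\<lambda>n. \<theta> n x) \<longlonglongrightarrow> \<theta>inf x"
    and "\<And>i. X i \<in> measurable M (count_space UNIV)"
    and "\<And>i x. x \<in> space M \<Longrightarrow> X i x \<in> {0, 1}"
    and "product_disintegration M {0, 1} X (bern_rm \<theta>)"
  shows "AE x in M. (\<lambda>n. (\<Sum>i<n. indicator {y. X i y = 1} x) / real n) \<longlonglongrightarrow> \<theta>inf x"
proof -
  interpret prob_space M by fact
  have thM[measurable]: "\<And>n. \<theta> n \<in> borel_measurable M"
    using assms(2) measurable_from_subalg unfolding submartingale_def by blast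
  note Xm[measurable] = assms(6)
  have th01: "\<And>n x. x \<in> space M \<Longrightarrow> 0 \<le> \<theta> n x \<and> \<theta> n x \<le> 1" by fact
  define I where "I i x = (indicator {y. X i y = 1} x :: real)" for i x
  have IM[measurable]: "I i \<in> borel_measurable M" for i unfolding I_def by measurable
  have I01: "I i x = 0 \<or> I i x = 1" for i x unfolding I_def by (auto simp: indicator_def)
  define Y where "Y i x = I i x - \<theta> i x" for i x
  have YM[measurable]: "Y i \<in> borel_measurable M" for i unfolding Y_def by measurable
  have Yb: "\<bar>Y i x\<bar> \<le> 1" if "x \<in> space M" for i x
    using th01[OF that, of i] I01[of i x] unfolding Y_def by auto
  have intb: "integrable M (f::'a \<Rightarrow> real)" if "f \<in> borel_measurable M" "\<And>x. x \<in> space M \<Longrightarrow> \<bar>f x\<bar> \<le> 1" for f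
    by (rule integrable_const_bound[where B=1]) (use that in \<open>auto intro!: AE_I2\<close>)
  have key: "(\<integral>x. Z x * (\<Prod>i\<in>T. I i x) \<partial>M) = (\<integral>x. Z x * (\<Prod>i\<in>T. \<theta> i x) \<partial>M)"
    if "Z \<in> borel_measurable (sigma_rm M {0, 1} (bern_rm \<theta>))" "\<And>x. x \<in> space M \<Longrightarrow> \<bar>Z x\<bar> \<le> 1"
       "T \<subseteq> {..N}" for Z T N
    unfolding I_def by (rule setup_facts[OF assms(1,2,3,6,7,8) that])
  have thG: "\<theta> n \<in> borel_measurable (sigma_rm M {0, 1} (bern_rm \<theta>))" for n
    by (rule theta_G) simp
  have oneG: "(\<lambda>x. 1::real) \<in> borel_measurable (sigma_rm M {0, 1} (bern_rm \<theta>))" by simp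
  have cross: "(\<integral>x. Y i x * Y j x \<partial>M) = 0" if ij: "i \<noteq> j" for i j
  proof -
    have k1: "(\<integral>x. I i x * I j x \<partial>M) = (\<integral>x. \<theta> i x * \<theta> j x \<partial>M)"
      using key[OF oneG _, of "{i,j}" "i+j"] ij by simp
    have k2: "(\<integral>x. \<theta> j x * I i x \<partial>M) = (\<integral>x. \<theta> i x * \<theta> j x \<partial>M)"
      using key[OF thG[of j] _, of "{i}" "i+j"] th01 by (simp add: mult.commute abs_of_nonneg)
    have k3: "(\<integral>x. \<theta> i x * I j x \<partial>M) = (\<integral>x. \<theta> i x * \<theta> j x \<partial>M)"
      using key[OF thG[of i] _, of "{j}" "i+j"] th01 by (simp add: abs_of_nonneg)
    have bI: "\<bar>I i x\<bar> \<le> 1" for i x using I01[of i x] by auto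
    have bt: "x \<in> space M \<Longrightarrow> \<bar>\<theta> i x\<bar> \<le> 1" for i x using th01[of x i] by auto
    have bm: "\<bar>a * b\<bar> \<le> 1" if "\<bar>a\<bar> \<le> 1" "\<bar>b\<bar> \<le> (1::real)" for a b
      using that by (simp add: abs_mult mult_le_one)
    have i1: "integrable M (\<lambda>x. I i x * I j x)" by (intro intb) (auto intro: bm bI)
    have i2: "integrable M (\<lambda>x. \<theta> j x * I i x)" by (intro intb) (auto intro: bm bI bt)
    have i3: "integrable M (\<lambda>x. \<theta> i x * I j x)" by (intro intb) (auto intro: bm bI bt)
    have i4: "integrable M (\<lambda>x. \<theta> i x * \<theta> j x)" by (intro intb) (auto intro: bm bt)
    have "(\<lambda>x. Y i x * Y j x) = (\<lambda>x. I i x * I j x - \<theta> j x * I i x - \<theta> i x * I j x + \<theta> i x * \<theta> j x)"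
      unfolding Y_def by (auto simp: algebra_simps)
    hence "(\<integral>x. Y i x * Y j x \<partial>M) = (\<integral>x. I i x * I j x \<partial>M) - (\<integral>x. \<theta> j x * I i x \<partial>M)
           - (\<integral>x. \<theta> i x * I j x \<partial>M) + (\<integral>x. \<theta> i x * \<theta> j x \<partial>M)"
      using i1 i2 i3 i4 by simp
    thus ?thesis using k1 k2 k3 by simp
  qed
  define S where "S n x = (\<Sum>i<n. Y i x)" for n x
  have SM[measurable]: "S n \<in> borel_measurable M" for n unfolding S_def by measurable
  have iYY: "integrable M (\<lambda>x. Y i x * Y j x)" for i j
    by (intro intb) (auto simp: abs_mult intro!: mult_le_one Yb)
  have Ssq: "(\<lambda>x. (S n x)^2) = (\<lambda>x. \<Sum>i<n. \<Sum>j<n. Y i x * Y j x)" for n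
    unfolding S_def power2_eq_square by (simp add: sum_product)
  have iSq: "integrable M (\<lambda>x. (S n x)^2)" for n
    unfolding Ssq by (intro Bochner_Integration.integrable_sum iYY)
  have second: "(\<integral>x. (S n x)^2 \<partial>M) \<le> real n" for n
  proof -
    note Ssq[of n]
    hence "(\<integral>x. (S n x)^2 \<partial>M) = (\<Sum>i<n. \<Sum>j<n. (\<integral>x. Y i x * Y j x \<partial>M))"
      using iYY by (simp add: integral_sum)
    also have "\<dots> = (\<Sum>i<n. (\<integral>x. Y i x * Y i x \<partial>M))"
    proof (rule sum.cong[OF refl])
      fix i assume i: "i \<in> {..<n}"
      show "(\<Sum>j<n. (\<integral>x. Y i x * Y j x \<partial>M)) = (\<integral>x. Y i x * Y i x \<partial>M)"
        using i by (subst sum.remove[of _ i]) (auto intro!: sum.neutral cross)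
    qed
    also have "\<dots> \<le> (\<Sum>i<n. 1)"
    proof (rule sum_mono)
      fix i
      have "(\<integral>x. Y i x * Y i x \<partial>M) \<le> (\<integral>x. 1 \<partial>M)"
      proof (rule integral_mono)
        fix x assume x: "x \<in> space M"
        have "\<bar>Y i x\<bar> * \<bar>Y i x\<bar> \<le> 1" using Yb[OF x, of i] by (intro mult_le_one) auto
        thus "Y i x * Y i x \<le> 1" by (metis abs_mult abs_ge_self order_trans)
      qed (auto simp: iYY)
      thus "(\<integral>x. Y i x * Y i x \<partial>M) \<le> 1" by (simp add: prob_space)
    qed
    finally show ?thesis by simp
  qed
  define h where "h m x = (S ((Suc m)^2) x / real ((Suc m)^2))^2" for m x
  have hM[measurable]: "h m \<in> borel_measurable M" for m unfolding h_def by measurable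
  have hb: "(\<integral>\<^sup>+x. ennreal (h m x) \<partial>M) \<le> ennreal (inverse (real (Suc m) ^ 2))" for m
  proof -
    define k where "k = real ((Suc m)^2)"
    have kpos: "k > 0" unfolding k_def by simp
    have iS: "integrable M (\<lambda>x. (S ((Suc m)^2) x)^2)"
      by (rule iSq)
    have "h m = (\<lambda>x. (S ((Suc m)^2) x)^2 / k^2)" unfolding h_def k_def by (simp add: power_divide)
    have eq: "(\<integral>\<^sup>+x. ennreal (h m x) \<partial>M) = ennreal (\<integral>x. (S ((Suc m)^2) x)^2 / k^2 \<partial>M)"
      using iS \<open>h m = _\<close> by (simp add: nn_integral_eq_integral)
    have "(\<integral>x. (S ((Suc m)^2) x)^2 / k^2 \<partial>M) = (\<integral>x. (S ((Suc m)^2) x)^2 \<partial>M) / k^2"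
      by (rule integral_divide_zero)
    also have "\<dots> \<le> k / k^2"
      using second[of "(Suc m)^2"] kpos unfolding k_def by (intro divide_right_mono) auto
    also have "k / k^2 = inverse k" using kpos by (simp add: power2_eq_square divide_inverse)
    also have "inverse k = inverse (real (Suc m) ^ 2)" unfolding k_def by simp
    finally have r: "(\<integral>x. (S ((Suc m)^2) x)^2 / k^2 \<partial>M) \<le> inverse (real (Suc m) ^ 2)" .
    show ?thesis unfolding eq by (rule ennreal_leI[OF r])
  qed
  have summ: "summable (\<lambda>m. inverse (real (Suc m) ^ 2))"
  proof -
    have "summable (\<lambda>n. inverse (real n ^ 2))" by (rule inverse_power_summable) simp
    thus ?thesis by (rule summable_ignore_initial_segment[where k=1, simplified])
  qed
  have "(\<integral>\<^sup>+x. (\<Sum>m. ennreal (h m x)) \<partial>M) = (\<Sum>m. \<integral>\<^sup>+x. ennreal (h m x) \<partial>M)"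
    by (rule nn_integral_suminf) measurable
  also have "\<dots> \<le> (\<Sum>m. ennreal (inverse (real (Suc m) ^ 2)))"
    by (intro suminf_le hb summableI)
  also have "\<dots> < top"
  proof -
    have "(\<Sum>m. ennreal (inverse (real (Suc m) ^ 2))) \<noteq> top"
      by (rule ennreal_suminf_neq_top[OF summ]) simp
    thus ?thesis using less_top by blast
  qed
  finally have fin: "(\<integral>\<^sup>+x. (\<Sum>m. ennreal (h m x)) \<partial>M) \<noteq> top" using less_top by blast
  have sumM: "(\<lambda>x. \<Sum>m. ennreal (h m x)) \<in> borel_measurable M" by measurable
  have AEfin: "AE x in M. (\<Sum>m. ennreal (h m x)) \<noteq> top"
    using nn_integral_PInf_AE[OF sumM, unfolded infinity_ennreal_def] fin by blast
  have AEsub: "AE x in M. (\<lambda>k. S ((Suc k)^2) x / real ((Suc k)^2)) \<longlonglongrightarrow> 0"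
    using AEfin
  proof eventually_elim
    case (elim x)
    have "summable (\<lambda>m. h m x)"
      by (rule summable_suminf_not_top) (use elim in \<open>auto simp: h_def\<close>)
    hence "(\<lambda>m. h m x) \<longlonglongrightarrow> 0" by (rule summable_LIMSEQ_zero)
    hence "(\<lambda>m. sqrt (h m x)) \<longlonglongrightarrow> sqrt 0" by (rule tendsto_real_sqrt)
    hence "(\<lambda>m. \<bar>S ((Suc m)^2) x / real ((Suc m)^2)\<bar>) \<longlonglongrightarrow> 0" by (simp only: h_def real_sqrt_abs real_sqrt_zero)
    thus ?case by (rule tendsto_rabs_zero_cancel)
  qed
  show ?thesis
    using AEsub assms(5) AE_space
  proof eventually_elim
    case (elim x)
    have "(\<lambda>n. (\<Sum>i<n. Y i x) / real n) \<longlonglongrightarrow> 0"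
    proof (rule interp)
      show "\<bar>Y i x\<bar> \<le> 1" for i using Yb elim(3) by blast
      show "(\<lambda>k. (\<Sum>i<(Suc k)^2. Y i x) / real ((Suc k)^2)) \<longlonglongrightarrow> 0" using elim(1) unfolding S_def .
    qed
    moreover have "(\<lambda>n. (\<Sum>i<n. \<theta> i x) / real n) \<longlonglongrightarrow> \<theta>inf x"
      by (rule cesaro) (use elim in auto)
    ultimately have "(\<lambda>n. (\<Sum>i<n. Y i x) / real n + (\<Sum>i<n. \<theta> i x) / real n) \<longlonglongrightarrow> 0 + \<theta>inf x"
      by (rule tendsto_add)
    moreover have "(\<Sum>i<n. Y i x) / real n + (\<Sum>i<n. \<theta> i x) / real n = (\<Sum>i<n. indicator {y. X i y = 1} x) / real n" for n
      unfolding Y_def I_def by (simp add: sum_subtractf add_divide_distrib[symmetric])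
    ultimately show ?case by simp
  qed
qed

end
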